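(* Let $k \geq 2$ be an integer. If $c$ is a rational number such that $\mathcal{G}[\{K_{1,k}\}, c]$ is finite and $\mathcal{G}(\{K_{1,k}\}, c)^*$ is infinite (that is, $c = c(K_{1,k})$ exists), then \[c \geq \frac{2}{2k+3}.\]
   Context: Graphs are finite and simple. For $D \subseteq V(G)$, $N[D]$ is the union of closed neighbourhoods of vertices of $D$. For a set $\mathcal{F}$ of graphs, $D$ is $\mathcal{F}$-isolating if $G - N[D]$ contains no subgraph isomorphic to a member of $\mathcal{F}$, and $\iota(G,\mathcal{F})$ is the minimum size of such a set. Let $\mathcal{G}$ be the set of connected graphs $G$ with $V(G) = [n]$ for some $n \geq 1$. For real $\alpha > 0$, $\mathcal{G}(\mathcal{F},\alpha) = \{G \in \mathcal{G} : \iota(G,\mathcal{F}) \le \lfloor \alpha|V(G)| \rfloor\}$, $\mathcal{G}(\mathcal{F},\alpha)^* = \{G \in \mathcal{G}(\mathcal{F},\alpha) : \iota(G,\mathcal{F}) = \lfloor \alpha |V(G)|\rfloor\}$, and $\mathcal{G}[\mathcal{F},\alpha] = \mathcal{G} \setminus \mathcal{G}(\mathcal{F},\alpha)$. The number $c(\mathcal{F})$, when it exists, is a rational number such that $\mathcal{G}[\mathcal{F},c(\mathcal{F})]$ is finite and $\mathcal{G}(\mathcal{F},c(\mathcal{F}))^*$ is infinite. $K_{1,k}$ is the star with $k$ leaves. *)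

theory Defs
  imports Complex_Main
begin

type_synonym graph = "nat set \<times> nat set set"

definition simple_graph :: "graph \<Rightarrow> bool" where
  "simple_graph G \<longleftrightarrow> finite (fst G) \<and>
     (\<forall>e\<in>snd G. \<exists>u v. u \<in> fst G \<and> v \<in> fst G \<and> u \<noteq> v \<and> e = {u, v})"

definition connected_graph :: "graph \<Rightarrow> bool" where
  "connected_graph G \<longleftrightarrow>
     (\<forall>u\<in>fst G. \<forall>v\<in>fst G. (\<lambda>x y. {x, y} \<in> snd G)\<^sup>*\<^sup>* u v)"

definition closed_nbhd :: "graph \<Rightarrow> nat set \<Rightarrow> nat set" where
  "closed_nbhd G D = D \<union> {v \<in> fst G. \<exists>u\<in>D. {u, v} \<in> snd G}"

definition delete_vertices :: "graph \<Rightarrow> nat set \<Rightarrow> graph" where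
  "delete_vertices G X = (fst G - X, {e \<in> snd G. e \<inter> X = {}})"

definition has_subgraph_iso :: "graph \<Rightarrow> graph \<Rightarrow> bool" where
  "has_subgraph_iso G H \<longleftrightarrow>
     (\<exists>f. inj_on f (fst H) \<and> f ` fst H \<subseteq> fst G \<and> (\<forall>e\<in>snd H. f ` e \<in> snd G))"

definition isolating :: "graph \<Rightarrow> graph set \<Rightarrow> nat set \<Rightarrow> bool" where
  "isolating G \<F> D \<longleftrightarrow> D \<subseteq> fst G \<and>
     (\<forall>F\<in>\<F>. \<not> has_subgraph_iso (delete_vertices G (closed_nbhd G D)) F)"

definition iota :: "graph \<Rightarrow> graph set \<Rightarrow> nat" where
  "iota G \<F> = Min {card D | D. isolating G \<F> D}"

definition GG :: "graph set" where
  "GG = {G. simple_graph G \<and> connected_graph G \<and> (\<exists>n\<ge>1. fst G = {1..n})}"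

definition G_le :: "graph set \<Rightarrow> real \<Rightarrow> graph set" where
  "G_le \<F> \<alpha> = {G \<in> GG. int (iota G \<F>) \<le> \<lfloor>\<alpha> * real (card (fst G))\<rfloor>}"

definition G_star :: "graph set \<Rightarrow> real \<Rightarrow> graph set" where
  "G_star \<F> \<alpha> = {G \<in> G_le \<F> \<alpha>. int (iota G \<F>) = \<lfloor>\<alpha> * real (card (fst G))\<rfloor>}"

definition G_gt :: "graph set \<Rightarrow> real \<Rightarrow> graph set" where
  "G_gt \<F> \<alpha> = GG - G_le \<F> \<alpha>"

definition star :: "nat \<Rightarrow> graph" where
  "star k = ({0..k}, {{0, i} | i. i \<in> {1..k}})"

end

theory Submission
  imports Defs
begin

definition vx :: "nat \<Rightarrow> nat \<Rightarrow> nat \<Rightarrow> nat" where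
  "vx k i t = 2 + i * (2*k+3) + t"

definition ladj :: "nat \<Rightarrow> nat \<Rightarrow> nat \<Rightarrow> bool" where
  "ladj k s t \<longleftrightarrow> (s = 0 \<and> t = 1) \<or> (s = 1 \<and> t = 0) \<or>
     (1 \<le> s \<and> s \<le> k+1 \<and> k+2 \<le> t \<and> t \<le> 2*k+2 \<and> t \<noteq> s+k+1) \<or>
     (1 \<le> t \<and> t \<le> k+1 \<and> k+2 \<le> s \<and> s \<le> 2*k+2 \<and> s \<noteq> t+k+1)"

definition gadj :: "nat \<Rightarrow> nat \<Rightarrow> nat \<Rightarrow> nat \<Rightarrow> bool" where
  "gadj k m x y \<longleftrightarrow> (\<exists>i<m. (x = 1 \<and> y = vx k i 0) \<or> (y = 1 \<and> x = vx k i 0) \<or>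
      (\<exists>s t. ladj k s t \<and> x = vx k i s \<and> y = vx k i t))"

definition Gr :: "nat \<Rightarrow> nat \<Rightarrow> graph" where
  "Gr k m = ({1..1 + m*(2*k+3)}, {{x,y} | x y. gadj k m x y})"

definition Vg :: "nat \<Rightarrow> nat \<Rightarrow> nat set" where
  "Vg k i = vx k i ` {..<2*k+3}"

lemma ladj_sym: "ladj k s t = ladj k t s"
  unfolding ladj_def by auto

lemma ladj_lt: "ladj k s t \<Longrightarrow> s < 2*k+3 \<and> t < 2*k+3"
  unfolding ladj_def by auto

lemma ladj_irrefl: "\<not> ladj k s s"
  unfolding ladj_def by auto

lemma gadj_sym: "gadj k m x y = gadj k m y x"
  unfolding gadj_def using ladj_sym by blast

lemma vx_ge2: "vx k i t \<ge> 2"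
  unfolding vx_def by simp

lemma vx_inj:
  assumes "s < 2*k+3" "t < 2*k+3" "vx k i s = vx k j t"
  shows "i = j \<and> s = t"
proof -
  have e: "s + i*(2*k+3) = t + j*(2*k+3)" using assms(3) unfolding vx_def by simp
  have "(s + i*(2*k+3)) div (2*k+3) = i" using assms(1) by simp
  moreover have "(t + j*(2*k+3)) div (2*k+3) = j" using assms(2) by simp
  ultimately have "i = j" using e by simp
  then show ?thesis using e by simp
qed

lemma vx_le:
  assumes "i < m" "t < 2*k+3"
  shows "vx k i t \<le> 1 + m*(2*k+3)"
proof -
  have "(i+1)*(2*k+3) \<le> m*(2*k+3)" using assms(1) by (intro mult_le_mono1) simp
  then show ?thesis using assms(2) unfolding vx_def by simp
qed

lemma vx_V: "i < m \<Longrightarrow> t < 2*k+3 \<Longrightarrow> vx k i t \<in> fst (Gr k m)"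
  using vx_le[of i m t k] vx_ge2[of k i t] unfolding Gr_def by simp

lemma E_iff: "{u,x} \<in> snd (Gr k m) \<longleftrightarrow> gadj k m u x"
proof
  assume "{u,x} \<in> snd (Gr k m)"
  then obtain a b where "{u,x} = {a,b}" "gadj k m a b" unfolding Gr_def by auto
  then show "gadj k m u x" using gadj_sym by (metis doubleton_eq_iff)
next
  assume "gadj k m u x"
  then show "{u,x} \<in> snd (Gr k m)" unfolding Gr_def by auto
qed

lemma gadj_V:
  assumes "gadj k m x y"
  shows "x \<in> fst (Gr k m) \<and> y \<in> fst (Gr k m) \<and> x \<noteq> y"
proof -
  from assms obtain i where i: "i < m" and
    c: "(x = 1 \<and> y = vx k i 0) \<or> (y = 1 \<and> x = vx k i 0) \<or>
      (\<exists>s t. ladj k s t \<and> x = vx k i s \<and> y = vx k i t)"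
    unfolding gadj_def by blast
  have one: "1 \<in> fst (Gr k m)" unfolding Gr_def by simp
  from c show ?thesis
  proof (elim disjE exE conjE)
    assume "x = 1" "y = vx k i 0" then show ?thesis
      using one vx_V[OF i, of 0 k] vx_ge2[of k i 0] by auto
  next
    assume "y = 1" "x = vx k i 0" then show ?thesis
      using one vx_V[OF i, of 0 k] vx_ge2[of k i 0] by auto
  next
    fix s t assume l: "ladj k s t" and xy: "x = vx k i s" "y = vx k i t"
    have "s < 2*k+3" "t < 2*k+3" using ladj_lt[OF l] by auto
    moreover have "s \<noteq> t" using l ladj_irrefl by metis
    ultimately show ?thesis using xy vx_V[OF i] vx_inj by metis
  qed
qed


lemma notin_N:
  assumes im: "i < m" and uniq: "\<forall>u\<in>D \<inter> Vg k i. u = vx k i s" and sK: "s < 2*k+3"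
    and t: "t < 2*k+3" "t \<noteq> 0" "t \<noteq> s" "\<not> ladj k s t"
  shows "vx k i t \<notin> closed_nbhd (Gr k m) D"
proof
  assume "vx k i t \<in> closed_nbhd (Gr k m) D"
  then consider "vx k i t \<in> D" | u where "u \<in> D" "{u, vx k i t} \<in> snd (Gr k m)"
    unfolding closed_nbhd_def by auto
  then show False
  proof cases
    case 1
    then have "vx k i t \<in> D \<inter> Vg k i" using t by (auto simp: Vg_def)
    then have "vx k i t = vx k i s" using uniq by blast
    then show False using vx_inj[OF t(1) sK] t by blast
  next
    case 2
    then have g: "gadj k m u (vx k i t)" by (simp add: E_iff)
    from g obtain j where j: "j < m" and
      c: "(u = 1 \<and> vx k i t = vx k j 0) \<or> (vx k i t = 1 \<and> u = vx k j 0) \<or>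
      (\<exists>s' t'. ladj k s' t' \<and> u = vx k j s' \<and> vx k i t = vx k j t')"
      unfolding gadj_def by blast
    from c show False
    proof (elim disjE exE conjE)
      assume "vx k i t = vx k j 0" then show False using vx_inj[OF t(1), of 0] t by auto
    next
      assume "vx k i t = 1" then show False using vx_ge2[of k i t] by simp
    next
      fix s' t' assume l: "ladj k s' t'" and u: "u = vx k j s'" and e: "vx k i t = vx k j t'"
      have lt: "s' < 2*k+3" "t' < 2*k+3" using ladj_lt[OF l] by auto
      have "i = j \<and> t = t'" using vx_inj[OF t(1) lt(2) e] .
      then have "u \<in> D \<inter> Vg k i" using u 2 lt by (auto simp: Vg_def)
      then have "u = vx k i s" using uniq by blast
      then have "s' = s" using vx_inj[OF lt(1) sK] u \<open>i = j \<and> t = t'\<close> by auto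
      then show False using l t \<open>i = j \<and> t = t'\<close> by simp
    qed
  qed
qed

lemma embed:
  assumes im: "i < m" and uniq: "\<forall>u\<in>D \<inter> Vg k i. u = vx k i s" and sK: "s < 2*k+3"
    and good: "\<And>t. t \<in> insert c (lf ` {1..k}) \<Longrightarrow> t < 2*k+3 \<and> t \<noteq> 0 \<and> t \<noteq> s \<and> \<not> ladj k s t"
    and adj: "\<And>j. j \<in> {1..k} \<Longrightarrow> ladj k c (lf j)"
    and inj: "inj_on lf {1..k}" and cn: "c \<notin> lf ` {1..k}"
  shows "has_subgraph_iso (delete_vertices (Gr k m) (closed_nbhd (Gr k m) D)) (star k)"
proof -
  define f where "f j = (if j = 0 then vx k i c else vx k i (lf j))" for j
  have ok: "vx k i t \<in> fst (Gr k m) - closed_nbhd (Gr k m) D" if "t \<in> insert c (lf ` {1..k})" for t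
    using good[OF that] notin_N[OF im uniq sK] vx_V[OF im] by blast
  have img: "f ` fst (star k) \<subseteq> fst (delete_vertices (Gr k m) (closed_nbhd (Gr k m) D))"
    unfolding star_def delete_vertices_def f_def using ok by auto
  have finj: "inj_on f (fst (star k))"
  proof (rule inj_onI)
    fix x y assume x: "x \<in> fst (star k)" and y: "y \<in> fst (star k)" and e: "f x = f y"
    have xs: "x \<le> k" "y \<le> k" using x y unfolding star_def by auto
    have gc: "c < 2*k+3" using good[of c] by auto
    have gl: "lf j < 2*k+3" if "j \<in> {1..k}" for j using good[of "lf j"] that by auto
    show "x = y"
    proof (cases "x = 0")
      case True
      show ?thesis
      proof (rule ccontr)
        assume "x \<noteq> y"
        then have "y \<in> {1..k}" using True xs by auto
        then have "vx k i c = vx k i (lf y)" using e True \<open>x \<noteq> y\<close> unfolding f_def by auto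
        then have "c = lf y" using vx_inj[OF gc gl[OF \<open>y \<in> {1..k}\<close>]] by auto
        then show False using cn \<open>y \<in> {1..k}\<close> by auto
      qed
    next
      case False
      note xF = False
      show ?thesis
      proof (cases "y = 0")
        case True
        have "x \<in> {1..k}" using xF xs by auto
        then have "vx k i c = vx k i (lf x)" using e True xF unfolding f_def by auto
        then have "c = lf x" using vx_inj[OF gc gl[OF \<open>x \<in> {1..k}\<close>]] by auto
        then show ?thesis using cn \<open>x \<in> {1..k}\<close> by auto
      next
        case False
        have "x \<in> {1..k}" "y \<in> {1..k}" using xF False xs by auto
        then have "vx k i (lf x) = vx k i (lf y)" using e False xF unfolding f_def by auto
        then have "lf x = lf y" using vx_inj gl \<open>x \<in> {1..k}\<close> \<open>y \<in> {1..k}\<close> by blast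
        then show ?thesis using inj \<open>x \<in> {1..k}\<close> \<open>y \<in> {1..k}\<close> by (meson inj_onD)
      qed
    qed
  qed
  have edges: "f ` e \<in> snd (delete_vertices (Gr k m) (closed_nbhd (Gr k m) D))" if eS: "e \<in> snd (star k)" for e
  proof -
    obtain j where j: "j \<in> {1..k}" "e = {0, j}" using eS unfolding star_def by auto
    have fe: "f ` e = {vx k i c, vx k i (lf j)}" using j unfolding f_def by auto
    have "gadj k m (vx k i c) (vx k i (lf j))" unfolding gadj_def using im adj[OF j(1)] by blast
    then have "f ` e \<in> snd (Gr k m)" using fe E_iff by simp
    moreover have "f ` e \<inter> closed_nbhd (Gr k m) D = {}" using fe ok j(1) by auto
    ultimately show ?thesis unfolding delete_vertices_def by simp
  qed
  show ?thesis unfolding has_subgraph_iso_def using finj img edges by blast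
qed


definition qm :: "nat \<Rightarrow> nat \<Rightarrow> nat" where
  "qm p j = (if j \<le> p then j - 1 else j)"

lemma qm_inj: "inj_on (qm p) {1..k}"
  unfolding qm_def inj_on_def by auto

lemma qm_props: "j \<in> {1..k} \<Longrightarrow> p \<le> k \<Longrightarrow> qm p j \<le> k \<and> qm p j \<noteq> p"
  unfolding qm_def by auto

lemma ins_img: "P c \<Longrightarrow> (\<And>j. j \<in> A \<Longrightarrow> P (lf j)) \<Longrightarrow> t \<in> insert c (lf ` A) \<Longrightarrow> P t"
  by auto

lemma a1: "q \<le> k \<Longrightarrow> q \<noteq> p \<Longrightarrow> p \<le> k \<Longrightarrow> \<not> ladj k (p+k+2) (k+2+q)"
  unfolding ladj_def by simp
lemma a2: "q \<le> k \<Longrightarrow> q \<noteq> p \<Longrightarrow> p \<le> k \<Longrightarrow> ladj k (1+p) (k+2+q)"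
  unfolding ladj_def by simp
lemma a3: "p \<le> k \<Longrightarrow> \<not> ladj k (p+k+2) (1+p)"
  unfolding ladj_def by simp
lemma b1: "q \<le> k \<Longrightarrow> q \<noteq> p \<Longrightarrow> p \<le> k \<Longrightarrow> \<not> ladj k (p+1) (1+q)"
  unfolding ladj_def by simp
lemma b2: "q \<le> k \<Longrightarrow> q \<noteq> p \<Longrightarrow> p \<le> k \<Longrightarrow> ladj k (k+2+p) (1+q)"
  unfolding ladj_def by simp
lemma b3: "p \<le> k \<Longrightarrow> \<not> ladj k (p+1) (k+2+p)"
  unfolding ladj_def by simp

lemma inj_shift: "inj_on g A \<Longrightarrow> inj_on (\<lambda>j. (c::nat) + g j) A"
  unfolding inj_on_def by simp

lemma has_star_local:
  assumes im: "i < m" and uniq: "\<forall>u\<in>D \<inter> Vg k i. u = vx k i s" and sK: "s < 2*k+3"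
  shows "has_subgraph_iso (delete_vertices (Gr k m) (closed_nbhd (Gr k m) D)) (star k)"
proof -
  consider "s = 0" | "1 \<le> s" "s \<le> k+1" | "k+2 \<le> s" by linarith
  then show ?thesis
  proof cases
    case 1
    show ?thesis
    proof (rule embed[OF im uniq sK, where c = "k+2" and lf = "\<lambda>j. 1 + j"])
      show "\<And>t. t \<in> insert (k + 2) ((\<lambda>j. 1 + j) ` {1..k}) \<Longrightarrow>
         t < 2 * k + 3 \<and> t \<noteq> 0 \<and> t \<noteq> s \<and> \<not> ladj k s t"
        using 1 by (auto simp: ladj_def)
      show "\<And>j. j \<in> {1..k} \<Longrightarrow> ladj k (k + 2) (1 + j)" by (auto simp: ladj_def)
      show "inj_on (\<lambda>j. 1 + j) {1..k}" by (auto simp: inj_on_def)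
      show "k + 2 \<notin> (\<lambda>j. 1 + j) ` {1..k}" by auto
    qed
  next
    case 2
    define p where "p = s - 1"
    have p: "s = p + 1" "p \<le> k" using 2 unfolding p_def by auto
    show ?thesis
    proof (rule embed[OF im uniq sK, where c = "k+2+p" and lf = "\<lambda>j. 1 + qm p j"])
      fix t assume t: "t \<in> insert (k+2+p) ((\<lambda>j. 1 + qm p j) ` {1..k})"
      show "t < 2 * k + 3 \<and> t \<noteq> 0 \<and> t \<noteq> s \<and> \<not> ladj k s t"
      proof (rule ins_img[OF _ _ t])
        show "k+2+p < 2 * k + 3 \<and> k+2+p \<noteq> 0 \<and> k+2+p \<noteq> s \<and> \<not> ladj k s (k+2+p)"
          using p b3[OF p(2)] by simp
        fix j assume j: "j \<in> {1..k}"
        have q: "qm p j \<le> k" "qm p j \<noteq> p" using qm_props[OF j p(2)] by auto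
        show "1 + qm p j < 2 * k + 3 \<and> 1 + qm p j \<noteq> 0 \<and> 1 + qm p j \<noteq> s \<and> \<not> ladj k s (1 + qm p j)"
          using p q b1[OF q p(2)] by simp
      qed
    next
      fix j assume j: "j \<in> {1..k}"
      have q: "qm p j \<le> k" "qm p j \<noteq> p" using qm_props[OF j p(2)] by auto
      then show "ladj k (k+2+p) (1 + qm p j)" using b2[OF q p(2)] by simp
    next
      show "inj_on (\<lambda>j. 1 + qm p j) {1..k}" using inj_shift[OF qm_inj] .
    next
      show "k+2+p \<notin> (\<lambda>j. 1 + qm p j) ` {1..k}"
      proof
        assume "k+2+p \<in> (\<lambda>j. 1 + qm p j) ` {1..k}"
        then obtain j where j: "j \<in> {1..k}" "k+2+p = 1 + qm p j" by blast
        then show False using qm_props[OF j(1) p(2)] by simp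
      qed
    qed
  next
    case 3
    define p where "p = s - (k+2)"
    have p: "s = p + k + 2" "p \<le> k" using 3 sK unfolding p_def by auto
    show ?thesis
    proof (rule embed[OF im uniq sK, where c = "1+p" and lf = "\<lambda>j. k + 2 + qm p j"])
      fix t assume t: "t \<in> insert (1+p) ((\<lambda>j. k + 2 + qm p j) ` {1..k})"
      show "t < 2 * k + 3 \<and> t \<noteq> 0 \<and> t \<noteq> s \<and> \<not> ladj k s t"
      proof (rule ins_img[OF _ _ t])
        show "1+p < 2 * k + 3 \<and> 1+p \<noteq> 0 \<and> 1+p \<noteq> s \<and> \<not> ladj k s (1+p)"
          using p a3[OF p(2)] by simp
        fix j assume j: "j \<in> {1..k}"
        have q: "qm p j \<le> k" "qm p j \<noteq> p" using qm_props[OF j p(2)] by auto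
        show "k + 2 + qm p j < 2 * k + 3 \<and> k + 2 + qm p j \<noteq> 0 \<and> k + 2 + qm p j \<noteq> s \<and> \<not> ladj k s (k + 2 + qm p j)"
          using p q a1[OF q p(2)] by simp
      qed
    next
      fix j assume j: "j \<in> {1..k}"
      have q: "qm p j \<le> k" "qm p j \<noteq> p" using qm_props[OF j p(2)] by auto
      then show "ladj k (1+p) (k + 2 + qm p j)" using a2[OF q p(2)] by simp
    next
      show "inj_on (\<lambda>j. k + 2 + qm p j) {1..k}" using inj_shift[OF qm_inj] .
    next
      show "1+p \<notin> (\<lambda>j. k + 2 + qm p j) ` {1..k}" using p by auto
    qed
  qed
qed

lemma gadget_two:
  assumes iso: "isolating (Gr k m) {star k} D" and im: "i < m"
  shows "2 \<le> card (D \<inter> Vg k i)"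
proof (rule ccontr)
  assume "\<not> 2 \<le> card (D \<inter> Vg k i)"
  then have c1: "card (D \<inter> Vg k i) \<le> 1" by simp
  have fin: "finite (D \<inter> Vg k i)" unfolding Vg_def by simp
  obtain s where sK: "s < 2*k+3" and uniq: "\<forall>u\<in>D \<inter> Vg k i. u = vx k i s"
  proof (cases "D \<inter> Vg k i = {}")
    case True
    then show ?thesis using that[of 0] by auto
  next
    case False
    then have "card (D \<inter> Vg k i) = 1" using c1 fin by (simp add: card_gt_0_iff le_antisym Suc_leI)
    then obtain v where v: "D \<inter> Vg k i = {v}" using card_1_singletonE by blast
    then have "v \<in> Vg k i" by auto
    then obtain s where "s < 2*k+3" "v = vx k i s" unfolding Vg_def by auto
    then show ?thesis using that[of s] v by auto
  qed
  have "has_subgraph_iso (delete_vertices (Gr k m) (closed_nbhd (Gr k m) D)) (star k)"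
    using has_star_local[OF im uniq sK] .
  then show False using iso unfolding isolating_def by auto
qed


lemma Vg_disj: "i \<noteq> j \<Longrightarrow> Vg k i \<inter> Vg k j = {}"
proof (rule ccontr)
  assume ij: "i \<noteq> j" and "Vg k i \<inter> Vg k j \<noteq> {}"
  then obtain s t where st: "s < 2*k+3" "t < 2*k+3" "vx k i s = vx k j t" unfolding Vg_def by blast
  show False using vx_inj[OF st] ij by simp
qed

lemma card_D:
  assumes iso: "isolating (Gr k m) {star k} D"
  shows "2*m \<le> card D"
proof -
  have DV: "D \<subseteq> fst (Gr k m)" using iso unfolding isolating_def by auto
  have finD: "finite D" using DV finite_subset unfolding Gr_def by auto
  have "card (\<Union>i\<in>{..<m}. D \<inter> Vg k i) = (\<Sum>i<m. card (D \<inter> Vg k i))"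
  proof (rule card_UN_disjoint)
    show "finite {..<m}" by simp
    show "\<forall>i\<in>{..<m}. finite (D \<inter> Vg k i)" using finD by simp
    show "\<forall>i\<in>{..<m}. \<forall>j\<in>{..<m}. i \<noteq> j \<longrightarrow> D \<inter> Vg k i \<inter> (D \<inter> Vg k j) = {}"
      using Vg_disj by blast
  qed
  moreover have "(\<Sum>i<m. card (D \<inter> Vg k i)) \<ge> (\<Sum>i<m. 2)"
    by (rule sum_mono) (use gadget_two[OF iso] in auto)
  moreover have "card (\<Union>i\<in>{..<m}. D \<inter> Vg k i) \<le> card D"
    by (rule card_mono[OF finD]) auto
  ultimately show ?thesis by simp
qed

lemma V_iso: "isolating (Gr k m) {star k} (fst (Gr k m))"
proof -
  have "fst (delete_vertices (Gr k m) (closed_nbhd (Gr k m) (fst (Gr k m)))) = {}"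
    unfolding delete_vertices_def closed_nbhd_def by auto
  moreover have "0 \<in> fst (star k)" unfolding star_def by auto
  ultimately have "\<not> has_subgraph_iso (delete_vertices (Gr k m) (closed_nbhd (Gr k m) (fst (Gr k m)))) (star k)"
    unfolding has_subgraph_iso_def by blast
  then show ?thesis unfolding isolating_def by auto
qed

lemma iota_ge: "2*m \<le> iota (Gr k m) {star k}"
proof -
  let ?S = "{card D | D. isolating (Gr k m) {star k} D}"
  have ne: "?S \<noteq> {}" using V_iso by blast
  have "?S \<subseteq> card ` Pow (fst (Gr k m))" unfolding isolating_def by auto
  then have fin: "finite ?S" by (rule finite_subset) (simp add: Gr_def)
  have "Min ?S \<in> ?S" using Min_in[OF fin ne] .
  then obtain D where "isolating (Gr k m) {star k} D" "Min ?S = card D" by auto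
  then show ?thesis unfolding iota_def using card_D by metis
qed

lemma rt_sym:
  assumes "\<And>a b. r a b \<Longrightarrow> r b a" and "r\<^sup>*\<^sup>* x y"
  shows "r\<^sup>*\<^sup>* y x"
  using assms(2)
proof (induction rule: rtranclp_induct)
  case base then show ?case by simp
next
  case (step y z)
  then show ?case using assms(1) by (meson converse_rtranclp_into_rtranclp)
qed

lemma reach:
  assumes k: "k \<ge> 2" and im: "i < m" and t: "t < 2*k+3"
  shows "(\<lambda>x y. {x, y} \<in> snd (Gr k m))\<^sup>*\<^sup>* (vx k i t) 1"
proof -
  let ?R = "\<lambda>x y. {x, y} \<in> snd (Gr k m)"
  have st: "?R (vx k i a) (vx k i b)" if "ladj k a b" for a b
    using that im unfolding E_iff gadj_def by blast
  have r0: "?R\<^sup>*\<^sup>* (vx k i 0) 1"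
    by (rule r_into_rtranclp) (use im in \<open>auto simp: E_iff gadj_def\<close>)
  have r1: "?R\<^sup>*\<^sup>* (vx k i 1) 1"
  proof -
    have "ladj k 1 0" by (simp add: ladj_def)
    then show ?thesis using converse_rtranclp_into_rtranclp[of ?R, OF st r0] by blast
  qed
  have rb: "?R\<^sup>*\<^sup>* (vx k i (k+2+r)) 1" if "1 \<le> r" "r \<le> k" for r
  proof -
    have "ladj k (k+2+r) 1" using that by (simp add: ladj_def)
    then show ?thesis using converse_rtranclp_into_rtranclp[of ?R, OF st r1] by blast
  qed
  have ra1: "?R\<^sup>*\<^sup>* (vx k i 2) 1"
  proof -
    have "ladj k 2 (k+2+2)" using k by (simp add: ladj_def)
    moreover have "?R\<^sup>*\<^sup>* (vx k i (k+2+2)) 1" using rb[of 2] k by simp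
    ultimately show ?thesis using converse_rtranclp_into_rtranclp[of ?R, OF st] by blast
  qed
  have rb0: "?R\<^sup>*\<^sup>* (vx k i (k+2)) 1"
  proof -
    have "ladj k (k+2) 2" using k by (simp add: ladj_def)
    then show ?thesis using converse_rtranclp_into_rtranclp[of ?R, OF st ra1] by blast
  qed
  have ra: "?R\<^sup>*\<^sup>* (vx k i (1+q)) 1" if "1 \<le> q" "q \<le> k" for q
  proof -
    have "ladj k (1+q) (k+2)" using that by (simp add: ladj_def)
    then show ?thesis using converse_rtranclp_into_rtranclp[of ?R, OF st rb0] by blast
  qed
  consider "t = 0" | "t = 1" | "2 \<le> t" "t \<le> k+1" | "k+2 \<le> t" by linarith
  then show ?thesis
  proof cases
    case 1 then show ?thesis using r0 by simp
  next
    case 2 then show ?thesis using r1 by simp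
  next
    case 3 then show ?thesis using ra[of "t-1"] by simp
  next
    case 4
    show ?thesis
    proof (cases "t = k+2")
      case True then show ?thesis using rb0 by simp
    next
      case False
      have e: "k+2+(t-(k+2)) = t" using 4 by simp
      have "1 \<le> t-(k+2)" "t-(k+2) \<le> k" using 4 False t by auto
      from rb[OF this] show ?thesis by (simp only: e)
    qed
  qed
qed

lemma Gr_GG:
  assumes k: "k \<ge> 2"
  shows "Gr k m \<in> GG"
proof -
  let ?R = "\<lambda>x y. {x, y} \<in> snd (Gr k m)"
  have sg: "simple_graph (Gr k m)"
    unfolding simple_graph_def
  proof
    show "finite (fst (Gr k m))" unfolding Gr_def by simp
    show "\<forall>e\<in>snd (Gr k m). \<exists>u v. u \<in> fst (Gr k m) \<and> v \<in> fst (Gr k m) \<and> u \<noteq> v \<and> e = {u, v}"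
    proof
      fix e assume "e \<in> snd (Gr k m)"
      then obtain x y where "e = {x,y}" "gadj k m x y" unfolding Gr_def by auto
      then show "\<exists>u v. u \<in> fst (Gr k m) \<and> v \<in> fst (Gr k m) \<and> u \<noteq> v \<and> e = {u, v}"
        using gadj_V by blast
    qed
  qed
  have to1: "?R\<^sup>*\<^sup>* x 1" if x: "x \<in> fst (Gr k m)" for x
  proof (cases "x = 1")
    case True then show ?thesis by simp
  next
    case False
    have x2: "2 \<le> x" "x \<le> 1 + m*(2*k+3)" using x False unfolding Gr_def by auto
    define i where "i = (x-2) div (2*k+3)"
    define t where "t = (x-2) mod (2*k+3)"
    have "(x-2) div (2*k+3) * (2*k+3) + (x-2) mod (2*k+3) = x - 2" by (rule div_mult_mod_eq)
    then have xe: "x = vx k i t" unfolding vx_def i_def t_def using x2 by linarith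
    have "x - 2 < m*(2*k+3)" using x2 by linarith
    then have im: "i < m" unfolding i_def by (rule less_mult_imp_div_less)
    have tK: "t < 2*k+3" unfolding t_def by simp
    show ?thesis using reach[OF k im tK] xe by simp
  qed
  have symR: "?R b a" if "?R a b" for a b using that by (simp add: insert_commute)
  have cg: "connected_graph (Gr k m)"
    unfolding connected_graph_def
  proof (intro ballI)
    fix u v assume u: "u \<in> fst (Gr k m)" and v: "v \<in> fst (Gr k m)"
    have "?R\<^sup>*\<^sup>* 1 v" using rt_sym[of ?R, OF symR to1[OF v]] by blast
    then show "?R\<^sup>*\<^sup>* u v" using to1[OF u] by (meson rtranclp_trans)
  qed
  have "fst (Gr k m) = {1..1 + m*(2*k+3)}" by (simp add: Gr_def)
  moreover have "1 + m*(2*k+3) \<ge> 1" by simp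
  ultimately have "\<exists>n\<ge>1. fst (Gr k m) = {1..n}" by blast
  then show ?thesis unfolding GG_def using sg cg by blast
qed


lemma Gr_inj: "inj_on (Gr k) A"
proof (rule inj_onI)
  fix a b assume "Gr k a = Gr k b"
  then have "{1..1 + a*(2*k+3)} = {(1::nat)..1 + b*(2*k+3)}" unfolding Gr_def by simp
  then have "1 + a*(2*k+3) = 1 + b*(2*k+3)" by (simp add: Icc_eq_Icc)
  then show "a = b" by simp
qed

theorem proposition1:
  fixes k :: nat and c :: rat
  assumes "k \<ge> 2"
    and "c > 0"
    and "finite (G_gt {star k} (real_of_rat c))"
    and "infinite (G_star {star k} (real_of_rat c))"
  shows "c \<ge> 2 / (2 * of_nat k + 3)"
proof (rule ccontr)
  assume "\<not> c \<ge> 2 / (2 * of_nat k + 3)"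
  then have cl: "c < 2 / (2 * of_nat k + 3)" by simp
  define r where "r = real_of_rat c"
  define K where "K = 2 * real k + 3"
  have Kp: "K > 0" unfolding K_def by simp
  have "real_of_rat c < real_of_rat (2 / (2 * of_nat k + 3))" using cl of_rat_less by blast
  moreover have "real_of_rat (2 / (2 * of_nat k + 3)) = 2 / K"
    unfolding K_def by (simp add: of_rat_divide of_rat_add of_rat_mult)
  ultimately have "r < 2 / K" unfolding r_def by simp
  then have d: "r * K < 2" using Kp by (simp add: pos_less_divide_eq)
  obtain N :: nat where N: "r / (2 - r*K) < real N" using reals_Archimedean2 by blast
  have inG: "Gr k m \<in> G_gt {star k} r" if mN: "m \<ge> N+1" for m
  proof -
    have dp: "2 - r*K > 0" using d by simp
    have "r < real N * (2 - r*K)" using N dp by (simp add: pos_divide_less_eq)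
    also have "\<dots> \<le> real m * (2 - r*K)" using mN dp by (intro mult_right_mono) auto
    finally have "r < real m * (2 - r*K)" .
    then have lt: "r * (1 + real m * K) < 2 * real m" by (simp add: algebra_simps)
    have card: "real (card (fst (Gr k m))) = 1 + real m * K" by (simp add: Gr_def K_def)
    have "real_of_int \<lfloor>r * real (card (fst (Gr k m)))\<rfloor> \<le> r * real (card (fst (Gr k m)))"
      by (rule of_int_floor_le)
    also have "\<dots> < 2 * real m" using lt card by simp
    also have "\<dots> \<le> real (iota (Gr k m) {star k})" using iota_ge[of m k] by linarith
    finally have "\<lfloor>r * real (card (fst (Gr k m)))\<rfloor> < int (iota (Gr k m) {star k})" by linarith
    then have "Gr k m \<notin> G_le {star k} r" unfolding G_le_def by auto
    then show ?thesis unfolding G_gt_def using Gr_GG[OF assms(1)] by blast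
  qed
  have "infinite (Gr k ` {N+1..})"
    using finite_imageD[OF _ Gr_inj] infinite_Ici by blast
  moreover have "Gr k ` {N+1..} \<subseteq> G_gt {star k} r" using inG by auto
  ultimately have "infinite (G_gt {star k} r)" using finite_subset by blast
  then show False using assms(3) unfolding r_def by simp
qed

end
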